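(* Let $[a,b]\subset\mathbb{R}$ be a compact interval, $N\geq 1$, and let $X_N$ be an $N$-dimensional linear subspace of $C^{N-1}[a,b]$. Then there exists a sequence $(X_N^m)_{m\geq1}$ of $N$-dimensional linear subspaces of $C^{N-1}[a,b]$ such that: (1) for every $m$ there is a finite subdivision $a\leq t_0<t_1<\dots<t_{p_m}=b$ of $[a,b]$ such that, for every $j$, the restriction of $X_N^m$ to the open subinterval $(t_j,t_{j+1})$ is an ECT-space on $(t_j,t_{j+1})$; (2) $U(X_N^m)\to U(X_N)$ as $m\to\infty$ in the metric of $C^{N-1}[a,b]$, where $U(Y)$ denotes the unit ball of the space $Y$.
   Context: For an open interval $J\subset\mathbb{R}$, a linear subspace $X_N\subset C^{N-1}(J)$ of dimension $N$ is called an ECT-space (Extended Complete Chebyshev space) on $J$ if it has a basis $v_1,\dots,v_N$ whose consecutive Wronskians satisfy $W(v_1,\dots,v_k)(t)>0$ for all $t\in J$ and all $k=1,\dots,N$. Here $W(v_1,\dots,v_k)=\det\big(v_i^{(l)}\big)_{1\le i\le k,\,0\le l\le k-1}$. The unit balls are taken in the norm of $C^{N-1}[a,b]$, and convergence of unit balls is meant in the (Hausdorff) metric induced by the $C^{N-1}[a,b]$ norm. *)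

theory Defs
  imports Complex_Main "Jordan_Normal_Form.Determinant"
begin

definition has_derivs_on :: "real set \<Rightarrow> nat \<Rightarrow> (real \<Rightarrow> real) \<Rightarrow> (nat \<Rightarrow> real \<Rightarrow> real) \<Rightarrow> bool" where
  "has_derivs_on S k f D \<longleftrightarrow>
     (\<forall>x\<in>S. D 0 x = f x) \<and>
     (\<forall>i<k. \<forall>x\<in>S. (D i has_real_derivative D (Suc i) x) (at x within S)) \<and>
     (\<forall>i\<le>k. continuous_on S (D i))"

text \<open>Elements of C^k[a,b] are represented by functions vanishing outside [a,b].\<close>
definition Cspace :: "real \<Rightarrow> real \<Rightarrow> nat \<Rightarrow> (real \<Rightarrow> real) set" where
  "Cspace a b k = {f. (\<exists>D. has_derivs_on {a..b} k f D) \<and> (\<forall>x. x \<notin> {a..b} \<longrightarrow> f x = 0)}"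

text \<open>i-th derivative of f on [a,b] (well defined for a < b and f in C^i[a,b]).\<close>
definition dth :: "real \<Rightarrow> real \<Rightarrow> nat \<Rightarrow> (real \<Rightarrow> real) \<Rightarrow> real \<Rightarrow> real" where
  "dth a b i f = (SOME D. has_derivs_on {a..b} i f D) i"

definition Cnorm :: "real \<Rightarrow> real \<Rightarrow> nat \<Rightarrow> (real \<Rightarrow> real) \<Rightarrow> real" where
  "Cnorm a b k f = Sup {\<bar>dth a b i f x\<bar> | i x. i \<le> k \<and> x \<in> {a..b}}"

definition dim_subspace :: "real \<Rightarrow> real \<Rightarrow> nat \<Rightarrow> (real \<Rightarrow> real) set \<Rightarrow> bool" where
  "dim_subspace a b N X \<longleftrightarrow>
     (\<exists>v :: nat \<Rightarrow> real \<Rightarrow> real.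
        (\<forall>i<N. v i \<in> Cspace a b (N - 1)) \<and>
        (\<forall>c. (\<forall>x\<in>{a..b}. (\<Sum>i<N. c i * v i x) = 0) \<longrightarrow> (\<forall>i<N. c i = 0)) \<and>
        X = {(\<lambda>x. \<Sum>i<N. c i * v i x) | c. True})"

definition wronskian :: "real \<Rightarrow> real \<Rightarrow> nat \<Rightarrow> (nat \<Rightarrow> real \<Rightarrow> real) \<Rightarrow> real \<Rightarrow> real" where
  "wronskian a b k v t = det (mat k k (\<lambda>(i, l). dth a b l (v i) t))"

definition ECT_restr :: "real \<Rightarrow> real \<Rightarrow> nat \<Rightarrow> (real \<Rightarrow> real) set \<Rightarrow> real set \<Rightarrow> bool" where
  "ECT_restr a b N X J \<longleftrightarrow>
     (\<exists>v :: nat \<Rightarrow> real \<Rightarrow> real.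
        (\<forall>i<N. v i \<in> X) \<and>
        (\<forall>f\<in>X. \<exists>c. \<forall>t\<in>J. f t = (\<Sum>i<N. c i * v i t)) \<and>
        (\<forall>k\<in>{1..N}. \<forall>t\<in>J. wronskian a b k v t > 0))"

definition unit_ball_C :: "real \<Rightarrow> real \<Rightarrow> nat \<Rightarrow> (real \<Rightarrow> real) set \<Rightarrow> (real \<Rightarrow> real) set" where
  "unit_ball_C a b k Y = {f \<in> Y. Cnorm a b k f \<le> 1}"

definition hausdorff_C :: "real \<Rightarrow> real \<Rightarrow> nat \<Rightarrow> (real \<Rightarrow> real) set \<Rightarrow> (real \<Rightarrow> real) set \<Rightarrow> real" where
  "hausdorff_C a b k A B =
     max (SUP f\<in>A. INF g\<in>B. Cnorm a b k (\<lambda>x. f x - g x))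
         (SUP g\<in>B. INF f\<in>A. Cnorm a b k (\<lambda>x. f x - g x))"

end

theory Submission
  imports Defs "HOL-Analysis.Analysis" "Jordan_Normal_Form.Char_Poly"
begin

hide_const (open) Finite_Cartesian_Product.mat Determinants.det Finite_Cartesian_Product.vec
hide_type (open) Finite_Cartesian_Product.vec


lemma hd_mono: "has_derivs_on S k f D \<Longrightarrow> i \<le> k \<Longrightarrow> has_derivs_on S i f D"
  unfolding has_derivs_on_def by auto

lemma hd_unique:
  assumes ab: "a < b" and D: "has_derivs_on {a..b} k f D" and E: "has_derivs_on {a..b} k f E"
  shows "i \<le> k \<Longrightarrow> x \<in> {a..b} \<Longrightarrow> D i x = E i x"
proof (induction i arbitrary: x)
  case 0 then show ?case using D E unfolding has_derivs_on_def by auto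
next
  case (Suc i)
  have eq: "\<And>y. y \<in> {a..b} \<Longrightarrow> D i y = E i y" using Suc by auto
  have d1: "(D i has_real_derivative D (Suc i) x) (at x within {a..b})"
    using D Suc.prems unfolding has_derivs_on_def by auto
  have d2: "(E i has_real_derivative E (Suc i) x) (at x within {a..b})"
    using E Suc.prems unfolding has_derivs_on_def by auto
  have d1': "(E i has_real_derivative D (Suc i) x) (at x within {a..b})"
    by (rule has_field_derivative_transform_within[where d=1, OF d1]) (use Suc.prems eq in auto)
  have "at x within {a..b} \<noteq> bot"
    using ab Suc.prems by (simp add: trivial_limit_within islimpt_Icc)
  then show ?case using has_field_derivative_unique[OF d1' d2] by simp
qed

lemma dth_eq:
  assumes ab: "a < b" and D: "has_derivs_on {a..b} k f D" and i: "i \<le> k" and x: "x \<in> {a..b}"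
  shows "dth a b i f x = D i x"
proof -
  have Di: "has_derivs_on {a..b} i f D" using hd_mono[OF D i] .
  then have "has_derivs_on {a..b} i f (SOME D. has_derivs_on {a..b} i f D)" by (rule someI[where P="has_derivs_on {a..b} i f"])
  from hd_unique[OF ab this Di order_refl x] show ?thesis unfolding dth_def .
qed

lemma hd_bdd:
  assumes D: "has_derivs_on {a..b} k f D"
  shows "\<exists>B. \<forall>i\<le>k. \<forall>x\<in>{a..b}. \<bar>D i x\<bar> \<le> B"
proof -
  have "\<forall>i\<in>{..k}. \<exists>B. \<forall>x\<in>{a..b}. \<bar>D i x\<bar> \<le> B"
  proof
    fix i assume "i \<in> {..k}"
    then have "continuous_on {a..b} (D i)" using D unfolding has_derivs_on_def by auto
    then have "compact (D i ` {a..b})" by (rule compact_continuous_image) simp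
    then have "bounded (D i ` {a..b})" by (rule compact_imp_bounded)
    then show "\<exists>B. \<forall>x\<in>{a..b}. \<bar>D i x\<bar> \<le> B" unfolding bounded_real by auto
  qed
  then obtain B where B: "\<And>i x. i \<in> {..k} \<Longrightarrow> x \<in> {a..b} \<Longrightarrow> \<bar>D i x\<bar> \<le> B i"
    by metis
  show ?thesis
  proof (intro exI allI impI ballI)
    fix i x assume i: "i \<le> k" and x: "x \<in> {a..b}"
    have "\<bar>D i x\<bar> \<le> \<bar>B i\<bar>" using B[of i x] i x by auto
    also have "\<dots> \<le> (\<Sum>j\<le>k. \<bar>B j\<bar>)" by (rule member_le_sum) (use i in auto)
    finally show "\<bar>D i x\<bar> \<le> (\<Sum>j\<le>k. \<bar>B j\<bar>)" .
  qed
qed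

lemma cnorm_set_eq:
  assumes ab: "a < b" and D: "has_derivs_on {a..b} k f D"
  shows "{\<bar>dth a b i f x\<bar> | i x. i \<le> k \<and> x \<in> {a..b}} = {\<bar>D i x\<bar> | i x. i \<le> k \<and> x \<in> {a..b}}"
  using dth_eq[OF ab D] by force

lemma cnorm_ge:
  assumes ab: "a < b" and D: "has_derivs_on {a..b} k f D" and i: "i \<le> k" and x: "x \<in> {a..b}"
  shows "\<bar>D i x\<bar> \<le> Cnorm a b k f"
proof -
  obtain B where B: "\<forall>i\<le>k. \<forall>x\<in>{a..b}. \<bar>D i x\<bar> \<le> B" using hd_bdd[OF D] by blast
  show ?thesis unfolding Cnorm_def cnorm_set_eq[OF ab D]
  proof (rule cSup_upper)
    show "\<bar>D i x\<bar> \<in> {\<bar>D i x\<bar> |i x. i \<le> k \<and> x \<in> {a..b}}" using i x by blast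
    show "bdd_above {\<bar>D i x\<bar> |i x. i \<le> k \<and> x \<in> {a..b}}"
      unfolding bdd_above_def using B by blast
  qed
qed

lemma cnorm_le:
  assumes ab: "a < b" and D: "has_derivs_on {a..b} k f D"
    and B: "\<And>i x. i \<le> k \<Longrightarrow> x \<in> {a..b} \<Longrightarrow> \<bar>D i x\<bar> \<le> B"
  shows "Cnorm a b k f \<le> B"
  unfolding Cnorm_def cnorm_set_eq[OF ab D]
  by (rule cSup_least) (use ab B in \<open>auto intro!: exI[of _ 0] exI[of _ a]\<close>)

lemma cnorm_nonneg:
  assumes ab: "a < b" and D: "has_derivs_on {a..b} k f D"
  shows "0 \<le> Cnorm a b k f"
  using cnorm_ge[OF ab D, of 0 a] ab by auto

lemma hd_sum:
  assumes "\<And>j. j < M \<Longrightarrow> has_derivs_on S k (f j) (D j)"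
  shows "has_derivs_on S k (\<lambda>x. \<Sum>j<M. c j * f j x) (\<lambda>i x. \<Sum>j<M. c j * D j i x)"
  unfolding has_derivs_on_def
proof (intro conjI ballI allI impI)
  fix x assume "x \<in> S"
  then show "(\<Sum>j<M. c j * D j 0 x) = (\<Sum>j<M. c j * f j x)"
    using assms unfolding has_derivs_on_def by (auto intro!: sum.cong)
next
  fix i x assume i: "i < k" and x: "x \<in> S"
  show "((\<lambda>x. \<Sum>j<M. c j * D j i x) has_real_derivative (\<Sum>j<M. c j * D j (Suc i) x)) (at x within S)"
    by (rule DERIV_sum, rule DERIV_cmult) (use assms i x in \<open>auto simp: has_derivs_on_def\<close>)
next
  fix i assume "i \<le> k"
  then show "continuous_on S (\<lambda>x. \<Sum>j<M. c j * D j i x)"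
    using assms unfolding has_derivs_on_def by (auto intro!: continuous_intros)
qed

definition phat :: "real \<Rightarrow> real \<Rightarrow> real poly \<Rightarrow> real \<Rightarrow> real" where
  "phat a b P x = (if x \<in> {a..b} then poly P (x - a) else 0)"

lemma poly_shift_deriv:
  "((\<lambda>x. poly P (x - a)) has_real_derivative poly (pderiv P) (x - a)) (at x within S)"
proof -
  have "((\<lambda>x. poly P (x - a)) has_real_derivative poly (pderiv P) (x - a) * 1) (at x)"
    by (rule DERIV_chain2[OF poly_DERIV]) (auto intro!: derivative_eq_intros)
  then show ?thesis by (simp add: has_field_derivative_at_within)
qed

lemma hd_phat: "has_derivs_on {a..b} k (phat a b P) (\<lambda>i x. poly ((pderiv ^^ i) P) (x - a))"
  unfolding has_derivs_on_def phat_def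
  by (auto intro!: poly_shift_deriv continuous_intros)

lemma phat_Cspace: "phat a b P \<in> Cspace a b k"
  unfolding Cspace_def using hd_phat[of a b k P] by (auto simp: phat_def)




definition pint :: "real \<Rightarrow> real poly \<Rightarrow> real poly" where
  "pint c P = pCons c (Poly (map (\<lambda>i. coeff P i / real (Suc i)) [0..<Suc (degree P)]))"

lemma poly_pint_0: "poly (pint c P) 0 = c"
  by (simp add: pint_def)

lemma coeff_pint_Suc: "coeff (pint c P) (Suc n) = (if n \<le> degree P then coeff P n / real (Suc n) else 0)"
proof -
  have "coeff (pint c P) (Suc n) = nth_default 0 (map (\<lambda>i. coeff P i / real (Suc i)) [0..<Suc (degree P)]) n"
    unfolding pint_def by (simp only: coeff_pCons_Suc coeff_Poly_eq)
  also have "\<dots> = (if n \<le> degree P then coeff P n / real (Suc n) else 0)"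
    unfolding nth_default_def by (simp only: length_map length_upt) (auto simp del: upt_Suc)
  finally show ?thesis .
qed

lemma pderiv_pint: "pderiv (pint c P) = P"
proof (rule poly_eqI)
  fix n
  have "coeff (pderiv (pint c P)) n = real (Suc n) * coeff (pint c P) (Suc n)"
    by (simp add: coeff_pderiv)
  also have "\<dots> = coeff P n" unfolding coeff_pint_Suc using coeff_eq_0[of P n] by auto
  finally show "coeff (pderiv (pint c P)) n = coeff P n" .
qed

lemma rpf_poly: "real_polynomial_function (g :: real \<Rightarrow> real) \<Longrightarrow> \<exists>G. \<forall>x. g x = poly G x"
proof (induction rule: real_polynomial_function.induct)
  case (linear f)
  define c where "c = f 1"
  have fx: "f x = x * c" for x
  proof -
    have "f (x * 1) = x * f 1" by (rule linear_scale_real[OF bounded_linear.linear[OF linear]])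
    then show ?thesis unfolding c_def by (metis mult_1_right)
  qed
  have "\<forall>x. f x = poly [:0, c:] x" by (simp add: fx mult.commute)
  then show ?case ..
next
  case (const c) then show ?case by (intro exI[of _ "[:c:]"]) auto
next
  case (add f g)
  from add.IH obtain F G where "\<forall>x. f x = poly F x" "\<forall>x. g x = poly G x" by (elim exE)
  then show ?case by (intro exI[of _ "F + G"]) auto
next
  case (mult f g)
  from mult.IH obtain F G where "\<forall>x. f x = poly F x" "\<forall>x. g x = poly G x" by (elim exE)
  then show ?case by (intro exI[of _ "F * G"]) auto
qed

lemma poly_hpderiv_0: "poly ((pderiv ^^ l) p) 0 = fact l * coeff (p :: real poly) l"
proof (induction l arbitrary: p)
  case 0 then show ?case by (simp add: poly_0_coeff_0)
next
  case (Suc l)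
  have "(pderiv ^^ Suc l) p = (pderiv ^^ l) (pderiv p)" by (simp only: funpow_Suc_right o_apply)
  then have "poly ((pderiv ^^ Suc l) p) 0 = fact l * (real (Suc l) * coeff p (Suc l))"
    using Suc[of "pderiv p"] by (simp only: coeff_pderiv of_nat_Suc)
  then show ?case by (simp only: fact_Suc of_nat_mult mult_ac)
qed

lemma hpderiv_add: "(pderiv ^^ l) (p + q) = (pderiv ^^ l) p + (pderiv ^^ l) (q :: real poly)"
  by (induction l) (auto simp: pderiv_add)

lemma hpderiv_smult: "(pderiv ^^ l) (smult c p) = smult c ((pderiv ^^ l) (p :: real poly))"
  by (induction l) (auto simp: pderiv_smult)

lemma hpderiv_sum: "(pderiv ^^ l) (\<Sum>j<(M::nat). smult (c j) (p j)) = (\<Sum>j<M. smult (c j) ((pderiv ^^ l) (p j :: real poly)))"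
  by (induction M) (auto simp: hpderiv_add hpderiv_smult)

lemma hpderiv_zero[simp]: "(pderiv ^^ l) (0 :: real poly) = 0"
  by (induction l) auto




lemma approx_D:
  assumes ab: "a < b" and D: "has_derivs_on {a..b} n v D" and e: "0 < e"
  shows "\<exists>P. \<forall>i\<le>n. \<forall>x\<in>{a..b}. \<bar>D i x - poly ((pderiv ^^ i) P) (x - a)\<bar> \<le> e"
proof -
  define M where "M = max 1 (b - a)"
  have M1: "1 \<le> M" unfolding M_def by simp
  define \<eta> where "\<eta> = e / M ^ n"
  have eta: "0 < \<eta>" unfolding \<eta>_def using e M1 by simp
  have "continuous_on {a..b} (D n)" using D unfolding has_derivs_on_def by auto
  note cont = this
  obtain g where g: "real_polynomial_function g" "\<And>x. x \<in> {a..b} \<Longrightarrow> \<bar>D n x - g x\<bar> < \<eta>"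
    by (metis Stone_Weierstrass_real_polynomial_function[OF compact_Icc cont eta])
  from rpf_poly[OF g(1)] obtain G where G: "\<forall>x. g x = poly G x" ..
  define G' where "G' = G \<circ>\<^sub>p [:a, 1:]"
  have G': "poly G' (x - a) = g x" for x unfolding G'_def using G by (simp add: poly_pcompose)
  define R where "R = rec_nat G' (\<lambda>m r. pint (D (n - Suc m) a) r)"
  have R0: "R 0 = G'" unfolding R_def by simp
  have RS: "R (Suc m) = pint (D (n - Suc m) a) (R m)" for m unfolding R_def by simp
  define P where "P = R n"
  have c1: "i \<le> n \<Longrightarrow> (pderiv ^^ i) P = R (n - i)" for i
  proof (induction i)
    case 0 then show ?case by (simp add: P_def)
  next
    case (Suc i)
    have "n - i = Suc (n - Suc i)" using Suc.prems by simp
    then have "R (n - i) = pint (D (n - Suc (n - Suc i)) a) (R (n - Suc i))" using RS by simp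
    then show ?case using Suc by (simp add: pderiv_pint)
  qed
  have c2: "m \<le> n \<Longrightarrow> \<forall>x\<in>{a..b}. \<bar>D (n - m) x - poly (R m) (x - a)\<bar> \<le> \<eta> * (b - a) ^ m" for m
  proof (induction m)
    case 0 then show ?case using g(2) G' R0 by (auto simp: less_imp_le)
  next
    case (Suc m)
    define i where "i = n - Suc m"
    have i: "i < n" "Suc i = n - m" using Suc.prems unfolding i_def by auto
    define f where "f x = D i x - poly (R (Suc m)) (x - a)" for x
    have df: "(f has_real_derivative (D (n - m) z - poly (R m) (z - a))) (at z within {a..b})"
      if z: "z \<in> {a..b}" for z
    proof -
      have 1: "(D i has_real_derivative D (n - m) z) (at z within {a..b})"
        using D i z unfolding has_derivs_on_def by auto
      have "pderiv (R (Suc m)) = R m" unfolding RS by (rule pderiv_pint)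
      then have 2: "((\<lambda>x. poly (R (Suc m)) (x - a)) has_real_derivative poly (R m) (z - a)) (at z within {a..b})"
        using poly_shift_deriv[of "R (Suc m)" a z "{a..b}"] by simp
      show ?thesis unfolding f_def by (rule DERIV_diff[OF 1 2])
    qed
    have bd: "norm (D (n - m) z - poly (R m) (z - a)) \<le> \<eta> * (b - a) ^ m" if "z \<in> {a..b}" for z
      using Suc.IH Suc.prems that by auto
    have fa: "f a = 0" unfolding f_def RS i_def by (simp add: poly_pint_0)
    show ?case
    proof
      fix x assume x: "x \<in> {a..b}"
      have "norm (f x - f a) \<le> \<eta> * (b - a) ^ m * norm (x - a)"
        by (rule field_differentiable_bound[OF convex_real_interval(5) df bd]) (use x ab in auto)
      also have "\<dots> \<le> \<eta> * (b - a) ^ m * (b - a)"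
        using x eta ab by (intro mult_left_mono) auto
      finally show "\<bar>D (n - Suc m) x - poly (R (Suc m)) (x - a)\<bar> \<le> \<eta> * (b - a) ^ Suc m"
        using fa unfolding f_def i_def by (simp add: mult_ac)
    qed
  qed
  show ?thesis
  proof (intro exI allI impI ballI)
    fix i x assume i: "i \<le> n" and x: "x \<in> {a..b}"
    have "\<bar>D i x - poly ((pderiv ^^ i) P) (x - a)\<bar> \<le> \<eta> * (b - a) ^ (n - i)"
      using c2[of "n - i"] c1[OF i] i x by auto
    also have "\<dots> \<le> \<eta> * M ^ n"
    proof (rule mult_left_mono)
      have "(b - a) ^ (n - i) \<le> M ^ (n - i)" using ab by (intro power_mono) (auto simp: M_def)
      also have "\<dots> \<le> M ^ n" using M1 by (intro power_increasing) auto
      finally show "(b - a) ^ (n - i) \<le> M ^ n" .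
    qed (use eta in auto)
    also have "\<dots> = e" unfolding \<eta>_def using M1 by simp
    finally show "\<bar>D i x - poly ((pderiv ^^ i) P) (x - a)\<bar> \<le> e" .
  qed
qed





lemma approx_basis:
  assumes ab: "a < b" and Dv: "\<And>j. j < N \<Longrightarrow> has_derivs_on {a..b} n (v j) (Dv j)" and e: "0 < e"
  shows "\<exists>Q. (\<forall>j<N. \<forall>i\<le>n. \<forall>x\<in>{a..b}. \<bar>Dv j i x - poly ((pderiv ^^ i) (Q j)) (x - a)\<bar> \<le> e) \<and>
             det (mat N N (\<lambda>(j, l). poly ((pderiv ^^ l) (Q j)) 0)) \<noteq> 0"
proof -
  have e2: "0 < e / 2" using e by simp
  have "\<exists>P. j < N \<longrightarrow> (\<forall>i\<le>n. \<forall>x\<in>{a..b}. \<bar>Dv j i x - poly ((pderiv ^^ i) P) (x - a)\<bar> \<le> e / 2)" for j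
  proof (cases "j < N")
    case True
    from approx_D[OF ab Dv[OF True] e2]
    obtain P where "\<forall>i\<le>n. \<forall>x\<in>{a..b}. \<bar>Dv j i x - poly ((pderiv ^^ i) P) (x - a)\<bar> \<le> e / 2" ..
    then show ?thesis by (intro exI[of _ P]) simp
  qed simp
  then have "\<forall>j. \<exists>P. j < N \<longrightarrow> (\<forall>i\<le>n. \<forall>x\<in>{a..b}. \<bar>Dv j i x - poly ((pderiv ^^ i) P) (x - a)\<bar> \<le> e / 2)" ..
  from choice[OF this] obtain P where
    P: "\<forall>j. j < N \<longrightarrow> (\<forall>i\<le>n. \<forall>x\<in>{a..b}. \<bar>Dv j i x - poly ((pderiv ^^ i) (P j)) (x - a)\<bar> \<le> e / 2)" ..
  define w :: "nat \<Rightarrow> real poly" where "w j = monom (1 / fact j) j" for j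
  have wd: "poly ((pderiv ^^ l) (w j)) 0 = (if j = l then 1 else 0)" for j l
    unfolding w_def poly_hpderiv_0 coeff_monom by simp
  have "\<exists>B. \<forall>i\<le>n. \<forall>x\<in>{a..b}. \<bar>poly ((pderiv ^^ i) (w j)) (x - a)\<bar> \<le> B" for j
    by (rule hd_bdd[OF hd_phat])
  then have "\<forall>j. \<exists>B. \<forall>i\<le>n. \<forall>x\<in>{a..b}. \<bar>poly ((pderiv ^^ i) (w j)) (x - a)\<bar> \<le> B" ..
  from choice[OF this] obtain B where B: "\<And>j i x. i \<le> n \<Longrightarrow> x \<in> {a..b} \<Longrightarrow> \<bar>poly ((pderiv ^^ i) (w j)) (x - a)\<bar> \<le> B j"
    by metis
  define W where "W = (\<Sum>j<N. \<bar>B j\<bar>) + 1"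
  have W: "\<bar>poly ((pderiv ^^ i) (w j)) (x - a)\<bar> \<le> W" if "i \<le> n" "x \<in> {a..b}" "j < N" for i x j
  proof -
    have "\<bar>poly ((pderiv ^^ i) (w j)) (x - a)\<bar> \<le> \<bar>B j\<bar>" using B[OF that(1,2), of j] by simp
    also have "\<dots> \<le> (\<Sum>j<N. \<bar>B j\<bar>)" by (rule member_le_sum) (use that in auto)
    finally show ?thesis unfolding W_def by simp
  qed
  have W0: "0 < W" unfolding W_def by (simp add: sum_nonneg add_nonneg_pos)
  define d0 where "d0 = e / (2 * W)"
  have d0: "0 < d0" unfolding d0_def using e W0 by simp
  define M0 where "M0 = mat N N (\<lambda>(j, l). poly ((pderiv ^^ l) (P j)) 0)"
  have M0c: "M0 \<in> carrier_mat N N" unfolding M0_def by simp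
  define chip where "chip = char_poly M0"
  have "coeff chip N = 1" unfolding chip_def using degree_monic_char_poly[OF M0c] by simp
  then have "chip \<noteq> 0" by auto
  then have fin: "finite (uminus ` {x. poly chip x = 0})" by (intro finite_imageI poly_roots_finite)
  have "infinite {0<..d0}" using d0 by simp
  then have "infinite ({0<..d0} - uminus ` {x. poly chip x = 0})" using fin by (rule Diff_infinite_finite[rotated])
  then obtain \<delta> where \<delta>: "\<delta> \<in> {0<..d0}" "\<delta> \<notin> uminus ` {x. poly chip x = 0}"
    by (metis finite.emptyI subsetI Diff_iff subset_empty)
  have chi: "poly chip (- \<delta>) \<noteq> 0"
  proof
    assume "poly chip (- \<delta>) = 0"
    then have "- (- \<delta>) \<in> uminus ` {x. poly chip x = 0}" by blast
    then show False using \<delta>(2) by simp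
  qed
  define Q where "Q j = P j + smult \<delta> (w j)" for j
  have Qd: "(pderiv ^^ l) (Q j) = (pderiv ^^ l) (P j) + smult \<delta> ((pderiv ^^ l) (w j))" for l j
    unfolding Q_def hpderiv_add hpderiv_smult ..
  have matQ: "mat N N (\<lambda>(j, l). poly ((pderiv ^^ l) (Q j)) 0) = char_matrix M0 (- \<delta>)"
    unfolding char_matrix_def
    by (rule eq_matI) (use M0c in \<open>auto simp: Qd wd M0_def\<close>)
  have "det (- char_matrix M0 (- \<delta>)) \<noteq> 0" using chi unfolding chip_def char_poly_matrix[OF M0c] .
  then have detQ: "det (mat N N (\<lambda>(j, l). poly ((pderiv ^^ l) (Q j)) 0)) \<noteq> 0"
    unfolding matQ using det_0_negate[of "char_matrix M0 (- \<delta>)" N] M0c by simp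
  show ?thesis
  proof (intro exI conjI allI impI ballI)
    fix j i x assume j: "j < N" and i: "i \<le> n" and x: "x \<in> {a..b}"
    have "\<bar>Dv j i x - poly ((pderiv ^^ i) (Q j)) (x - a)\<bar> =
          \<bar>(Dv j i x - poly ((pderiv ^^ i) (P j)) (x - a)) - \<delta> * poly ((pderiv ^^ i) (w j)) (x - a)\<bar>"
      by (simp add: Qd algebra_simps)
    also have "\<dots> \<le> e / 2 + \<delta> * W"
    proof -
      have "\<bar>\<delta> * poly ((pderiv ^^ i) (w j)) (x - a)\<bar> \<le> \<delta> * W"
        using W[OF i x j] \<delta>(1) by (simp add: abs_mult mult_left_mono)
      then show ?thesis using P j i x by (smt (verit))
    qed
    also have "\<dots> \<le> e / 2 + d0 * W" using \<delta>(1) W0 by (intro add_left_mono mult_right_mono) auto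
    also have "\<dots> = e" unfolding d0_def using W0 by simp
    finally show "\<bar>Dv j i x - poly ((pderiv ^^ i) (Q j)) (x - a)\<bar> \<le> e" .
  qed (rule detQ)
qed




lemma det_rowscale:
  "Determinant.det (Matrix.mat k k (\<lambda>(i, l). g i * A i l)) = (\<Prod>i<k. g i) * Determinant.det (Matrix.mat k k (\<lambda>(i, l). A i l))"
proof -
  have c1: "Matrix.mat k k (\<lambda>(i, l). g i * A i l) \<in> carrier_mat k k" by simp
  have c2: "Matrix.mat k k (\<lambda>(i, l). A i l) \<in> carrier_mat k k" by simp
  have "Determinant.det (Matrix.mat k k (\<lambda>(i, l). g i * A i l)) =
        (\<Sum>p\<in>{p. p permutes {0..<k}}. signof p * (\<Prod>i = 0..<k. g i * A i (p i)))"
    unfolding det_def'[OF c1]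
    by (intro sum.cong refl arg_cong2[where f="(*)"] prod.cong) (auto simp: permutes_in_image)
  also have "\<dots> = (\<Sum>p\<in>{p. p permutes {0..<k}}. (\<Prod>i = 0..<k. g i) * (signof p * (\<Prod>i = 0..<k. A i (p i))))"
    by (simp add: prod.distrib mult_ac)
  also have "\<dots> = (\<Prod>i<k. g i) * (\<Sum>p\<in>{p. p permutes {0..<k}}. signof p * (\<Prod>i = 0..<k. A i (p i)))"
    by (simp add: sum_distrib_left atLeast0LessThan)
  also have "(\<Sum>p\<in>{p. p permutes {0..<k}}. signof p * (\<Prod>i = 0..<k. A i (p i))) =
             Determinant.det (Matrix.mat k k (\<lambda>(i, l). A i l))"
    unfolding det_def'[OF c2]
    by (intro sum.cong refl arg_cong2[where f="(*)"] prod.cong) (auto simp: permutes_in_image)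
  finally show ?thesis .
qed

lemma telescope:
  fixes s :: "nat \<Rightarrow> real"
  assumes s0: "s 0 = 1" and sq: "\<And>i. i \<le> K \<Longrightarrow> s i * s i = 1"
  shows "k \<le> K \<Longrightarrow> (\<Prod>i<k. s (Suc i) * s i) = s k"
proof (induction k)
  case 0 then show ?case using s0 by simp
next
  case (Suc k)
  then have "(\<Prod>i<Suc k. s (Suc i) * s i) = s k * (s (Suc k) * s k)" by simp
  also have "\<dots> = s (Suc k) * (s k * s k)" by (simp add: mult_ac)
  also have "\<dots> = s (Suc k)" using sq[of k] Suc.prems by simp
  finally show ?case .
qed

lemma subdivision:
  fixes T :: "real set"
  assumes fin: "finite T" and sub: "T \<subseteq> {a..b}" and aT: "a \<in> T" and bT: "b \<in> T" and ab: "a < b"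
  shows "\<exists>p t. t 0 = a \<and> t p = b \<and> (\<forall>j<p. t j < t (Suc j)) \<and> (\<forall>j\<le>p. t j \<in> {a..b}) \<and>
               (\<forall>j<p. \<forall>y\<in>T. \<not> (t j < y \<and> y < t (Suc j)))"
proof -
  define xs where "xs = sorted_list_of_set T"
  have sw: "sorted_wrt (<) xs" unfolding xs_def by (rule strict_sorted_list_of_set)
  have set: "set xs = T" unfolding xs_def using fin by simp
  define p where "p = length xs - 1"
  have ne: "xs \<noteq> []" using set aT by auto
  then have len: "length xs = Suc p" unfolding p_def by simp
  have lt: "i < j \<Longrightarrow> j \<le> p \<Longrightarrow> xs ! i < xs ! j" for i j
    using sorted_wrt_nth_less[OF sw, of i j] len by simp
  have mem: "j \<le> p \<Longrightarrow> xs ! j \<in> T" for j using set len by (metis less_Suc_eq_le nth_mem)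
  have memI: "j \<le> p \<Longrightarrow> xs ! j \<in> {a..b}" for j using mem sub by blast
  obtain ka where ka: "ka < length xs" "xs ! ka = a" using aT set by (metis in_set_conv_nth)
  obtain kb where kb: "kb < length xs" "xs ! kb = b" using bT set by (metis in_set_conv_nth)
  have t0: "xs ! 0 = a"
  proof (cases "ka = 0")
    case False
    then have "xs ! 0 < a" using lt[of 0 ka] ka len by auto
    then show ?thesis using memI[of 0] by auto
  qed (use ka in auto)
  have tp: "xs ! p = b"
  proof (cases "kb = p")
    case False
    then have "b < xs ! p" using lt[of kb p] kb len by auto
    then show ?thesis using memI[of p] by auto
  qed (use kb in auto)
  show ?thesis
  proof (intro exI[of _ p] exI[of _ "\<lambda>j. xs ! j"] conjI allI impI ballI t0 tp)
    fix j assume "j < p" then show "xs ! j < xs ! Suc j" using lt by auto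
  next
    fix j assume "j \<le> p" then show "xs ! j \<in> {a..b}" by (rule memI)
  next
    fix j y assume j: "j < p" and y: "y \<in> T"
    obtain k where k: "k < length xs" "xs ! k = y" using y set by (metis in_set_conv_nth)
    show "\<not> (xs ! j < y \<and> y < xs ! Suc j)"
    proof
      assume *: "xs ! j < y \<and> y < xs ! Suc j"
      show False
      proof (cases "k \<le> j")
        case True
        then have "xs ! k \<le> xs ! j" using lt[of k j] j by (cases "k = j") auto
        then show False using * k by auto
      next
        case False
        then have "xs ! Suc j \<le> xs ! k" using lt[of "Suc j" k] k len by (cases "k = Suc j") auto
        then show False using * k by auto
      qed
    qed
  qed
qed




definition MQ :: "nat \<Rightarrow> (nat \<Rightarrow> real poly) \<Rightarrow> real mat" where
  "MQ N Q = Matrix.mat N N (\<lambda>(j, l). poly ((pderiv ^^ l) (Q j)) 0)"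

lemma poly_comb_zero:
  assumes ab: "a < b" and z: "\<forall>x\<in>{a..b}. (\<Sum>j<N. c j * phat a b (Q j) x) = 0"
  shows "(\<Sum>j<N. smult (c j) (Q j)) = 0"
proof (rule ccontr)
  let ?R = "\<Sum>j<N. smult (c j) (Q j)"
  assume R: "?R \<noteq> 0"
  have "{0..b - a} \<subseteq> {y. poly ?R y = 0}"
  proof
    fix y assume y: "y \<in> {0..b - a}"
    then have "y + a \<in> {a..b}" by auto
    then have "(\<Sum>j<N. c j * phat a b (Q j) (y + a)) = 0" using z by blast
    moreover have "phat a b (Q j) (y + a) = poly (Q j) y" for j using y by (auto simp: phat_def)
    ultimately show "y \<in> {y. poly ?R y = 0}" by (simp add: poly_sum)
  qed
  moreover have "infinite {0..b - a}" using ab by simp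
  ultimately show False using poly_roots_finite[OF R] finite_subset by blast
qed

lemma comb_zero_coeffs:
  assumes det: "Determinant.det (MQ N Q) \<noteq> 0" and R: "(\<Sum>j<N. smult (c j) (Q j)) = 0"
  shows "\<forall>j<N. c j = 0"
proof -
  have z: "(\<Sum>j<N. c j * poly ((pderiv ^^ l) (Q j)) 0) = 0" for l
  proof -
    have "poly ((pderiv ^^ l) (\<Sum>j<N. smult (c j) (Q j))) 0 = 0" using R by simp
    then show ?thesis unfolding hpderiv_sum by (simp add: poly_sum)
  qed
  have Mc: "MQ N Q \<in> carrier_mat N N" unfolding MQ_def by simp
  have Tc: "transpose_mat (MQ N Q) \<in> carrier_mat N N" using Mc by simp
  have dT: "Determinant.det (transpose_mat (MQ N Q)) \<noteq> 0" using det Determinant.det_transpose[OF Mc] by simp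
  define cv where "cv = vec N c"
  have cvc: "cv \<in> carrier_vec N" unfolding cv_def by simp
  have "transpose_mat (MQ N Q) *\<^sub>v cv = 0\<^sub>v N"
  proof (rule eq_vecI)
    fix l assume "l < dim_vec (0\<^sub>v N :: real vec)"
    then have l: "l < N" by simp
    have "(transpose_mat (MQ N Q) *\<^sub>v cv) $ l = (\<Sum>j = 0..<N. poly ((pderiv ^^ l) (Q j)) 0 * c j)"
      using l Mc unfolding cv_def MQ_def by (simp add: scalar_prod_def)
    also have "\<dots> = 0" using z[of l] by (simp add: atLeast0LessThan mult.commute)
    finally show "(transpose_mat (MQ N Q) *\<^sub>v cv) $ l = 0\<^sub>v N $ l" using l by simp
  qed (use Mc in simp)
  then have "cv = 0\<^sub>v N" using det_0_iff_vec_prod_zero_field[OF Tc] dT cvc by blast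
  then show ?thesis unfolding cv_def by (metis index_vec index_zero_vec(1))
qed

lemma dim_span_Q:
  assumes ab: "a < b" and det: "Determinant.det (MQ N Q) \<noteq> 0"
  shows "dim_subspace a b N {(\<lambda>x. \<Sum>j<N. c j * phat a b (Q j) x) | c. True}"
  unfolding dim_subspace_def
proof (intro exI[of _ "\<lambda>j. phat a b (Q j)"] conjI allI impI refl)
  fix j show "phat a b (Q j) \<in> Cspace a b (N - 1)" by (rule phat_Cspace)
next
  fix c i assume "\<forall>x\<in>{a..b}. (\<Sum>j<N. c j * phat a b (Q j) x) = 0" "i < N"
  then show "c i = 0" using comb_zero_coeffs[OF det poly_comb_zero[OF ab]] by blast
qed




lemma sign_const:
  fixes W :: "real poly"
  assumes nz: "\<And>y. y \<in> {u<..<v} \<Longrightarrow> poly W (y - a) \<noteq> 0"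
    and y: "y \<in> {u<..<v}" and z: "z \<in> {u<..<v}"
  shows "0 < poly W (y - a) * poly W (z - a)"
proof (rule ccontr)
  assume "\<not> 0 < poly W (y - a) * poly W (z - a)"
  moreover have "poly W (y - a) * poly W (z - a) \<noteq> 0" using nz y z by simp
  ultimately have neg: "poly W (y - a) * poly W (z - a) < 0" by linarith
  have "y \<noteq> z" using neg by (auto simp: mult_less_0_iff)
  show False
  proof (cases "y < z")
    case True
    obtain r where r: "y - a < r" "r < z - a" "poly W r = 0"
      using poly_IVT[of "y - a" "z - a" W] True neg by auto
    have "r + a \<in> {u<..<v}" using r y z by auto
    then show False using nz[of "r + a"] r by simp
  next
    case False
    then have "z < y" using \<open>y \<noteq> z\<close> by simp
    obtain r where r: "z - a < r" "r < y - a" "poly W r = 0"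
      using poly_IVT[of "z - a" "y - a" W] \<open>z < y\<close> neg by (auto simp: mult.commute)
    have "r + a \<in> {u<..<v}" using r y z by auto
    then show False using nz[of "r + a"] r by simp
  qed
qed

lemma mat_entry_sum:
  assumes "A \<in> carrier_mat n m" "B \<in> carrier_mat m k" "i < n" "j < k"
  shows "(A * B) $$ (i, j) = (\<Sum>l<m. A $$ (i, l) * B $$ (l, j))"
  using assms by (simp add: scalar_prod_def atLeast0LessThan)

lemma ect_span_Q:
  assumes ab: "a < b" and N1: "N \<ge> 1" and det: "Determinant.det (MQ N Q) \<noteq> 0"
  shows "\<exists>p t. t 0 = a \<and> t p = b \<and> (\<forall>j<p. t j < t (Suc j)) \<and>
     (\<forall>j<p. ECT_restr a b N {(\<lambda>x. \<Sum>j<N. c j * phat a b (Q j) x) | c. True} {t j<..<t (Suc j)})"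
proof -
  define M where "M = MQ N Q"
  have Mc: "M \<in> carrier_mat N N" unfolding M_def MQ_def by simp
  define dM where "dM = Determinant.det M"
  have dM: "dM \<noteq> 0" using det unfolding dM_def M_def .
  define Cf where "Cf i j = adj_mat M $$ (i, j) / dM" for i j
  have Ac: "adj_mat M \<in> carrier_mat N N" using adj_mat(1)[OF Mc] .
  have CM: "(\<Sum>j<N. Cf i j * M $$ (j, l)) = (if i = l then 1 else 0)" if "i < N" "l < N" for i l
  proof -
    have "(adj_mat M * M) $$ (i, l) = (\<Sum>j<N. adj_mat M $$ (i, j) * M $$ (j, l))"
      by (rule mat_entry_sum[OF Ac Mc that])
    also have "adj_mat M * M = dM \<cdot>\<^sub>m 1\<^sub>m N" using adj_mat(3)[OF Mc] unfolding dM_def .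
    finally have "(\<Sum>j<N. adj_mat M $$ (i, j) * M $$ (j, l)) = dM * (if i = l then 1 else 0)"
      using that by simp
    then show ?thesis unfolding Cf_def using dM
      by (simp add: sum_divide_distrib[symmetric] field_simps)
  qed
  have MC: "(\<Sum>i<N. M $$ (l, i) * Cf i j) = (if l = j then 1 else 0)" if "l < N" "j < N" for l j
  proof -
    have "(M * adj_mat M) $$ (l, j) = (\<Sum>i<N. M $$ (l, i) * adj_mat M $$ (i, j))"
      by (rule mat_entry_sum[OF Mc Ac that])
    also have "M * adj_mat M = dM \<cdot>\<^sub>m 1\<^sub>m N" using adj_mat(2)[OF Mc] unfolding dM_def .
    finally have "(\<Sum>i<N. M $$ (l, i) * adj_mat M $$ (i, j)) = dM * (if l = j then 1 else 0)"
      using that by simp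
    then show ?thesis unfolding Cf_def using dM
      by (simp add: sum_divide_distrib[symmetric] field_simps)
  qed
  define PE where "PE i l = (\<Sum>j<N. smult (Cf i j) ((pderiv ^^ l) (Q j)))" for i l
  have pPE: "poly (PE i l) y = (\<Sum>j<N. Cf i j * poly ((pderiv ^^ l) (Q j)) y)" for i l y
    unfolding PE_def by (simp add: poly_sum)
  define WP where "WP k = Determinant.det (Matrix.mat k k (\<lambda>(i, l). PE i l))" for k
  have pWP: "poly (WP k) y = Determinant.det (Matrix.mat k k (\<lambda>(i, l). poly (PE i l) y))" for k y
    unfolding WP_def by (rule poly_det_cong[of _ k]) auto
  have WP0: "poly (WP k) 0 = 1" if "k \<le> N" for k
  proof -
    have "Matrix.mat k k (\<lambda>(i, l). poly (PE i l) 0) = 1\<^sub>m k"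
    proof (rule eq_matI)
      fix i l assume "i < dim_row (1\<^sub>m k :: real mat)" "l < dim_col (1\<^sub>m k :: real mat)"
      then have il: "i < k" "l < k" by auto
      have "poly (PE i l) 0 = (\<Sum>j<N. Cf i j * M $$ (j, l))"
        unfolding pPE using il that by (intro sum.cong refl) (auto simp: M_def MQ_def)
      also have "\<dots> = (if i = l then 1 else 0)" using CM[of i l] il that by simp
      finally show "Matrix.mat k k (\<lambda>(i, l). poly (PE i l) 0) $$ (i, l) = 1\<^sub>m k $$ (i, l)"
        using il by simp
    qed auto
    then show ?thesis unfolding pWP by simp
  qed
  have WPnz: "WP k \<noteq> 0" if "k \<le> N" for k using WP0[OF that] by auto
  define Z where "Z = (\<Union>k\<in>{1..N}. {y. poly (WP k) y = 0})"
  have finZ: "finite Z" unfolding Z_def using WPnz by (auto intro!: poly_roots_finite)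
  define T where "T = {a, b} \<union> ({a<..<b} \<inter> (\<lambda>y. y + a) ` Z)"
  have finT: "finite T" unfolding T_def using finZ by simp
  have subT: "T \<subseteq> {a..b}" unfolding T_def using ab by auto
  obtain p t where t0: "t 0 = a" and tp: "t p = b" and tlt: "\<forall>j<p. t j < t (Suc j)"
    and tI: "\<forall>j\<le>p. t j \<in> {a..b}" and gap: "\<forall>j<p. \<forall>y\<in>T. \<not> (t j < y \<and> y < t (Suc j))"
    using subdivision[OF finT subT _ _ ab] unfolding T_def by blast
  show ?thesis
  proof (intro exI[of _ p] exI[of _ t] conjI t0 tp tlt allI impI)
    fix jj assume jj: "jj < p"
    define u where "u = t jj"
    define v where "v = t (Suc jj)"
    have uv: "a \<le> u" "u < v" "v \<le> b" using tI tlt jj unfolding u_def v_def by auto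
    have JI: "y \<in> {u<..<v} \<Longrightarrow> y \<in> {a..b}" for y using uv by auto
    have noroot: "poly (WP k) (y - a) \<noteq> 0" if "y \<in> {u<..<v}" "k \<in> {1..N}" for y k
    proof
      assume "poly (WP k) (y - a) = 0"
      then have "y - a \<in> Z" unfolding Z_def using that by auto
      then have "y \<in> T" unfolding T_def using that uv by (auto intro!: image_eqI[of _ _ "y - a"])
      then show False using gap jj that unfolding u_def v_def by auto
    qed
    define mid where "mid = (u + v) / 2"
    have mid: "mid \<in> {u<..<v}" unfolding mid_def using uv by auto
    define s where "s k = (if k = 0 then 1 else sgn (poly (WP k) (mid - a)))" for k
    have sq: "s k * s k = 1" if "k \<le> N" for k
    proof (cases "k = 0")
      case False
      then have "poly (WP k) (mid - a) \<noteq> 0" using noroot[OF mid, of k] that by auto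
      then show ?thesis using False unfolding s_def by (auto simp: sgn_if)
    qed (simp add: s_def)
    define \<sigma> where "\<sigma> i = s (Suc i) * s i" for i
    have \<sigma>sq: "\<sigma> i * \<sigma> i = 1" if "i < N" for i
    proof -
      have "\<sigma> i * \<sigma> i = (s (Suc i) * s (Suc i)) * (s i * s i)" unfolding \<sigma>_def by (simp add: mult_ac)
      then show ?thesis using sq[of i] sq[of "Suc i"] that by simp
    qed
    define V where "V i = (\<lambda>x. \<Sum>j<N. (\<sigma> i * Cf i j) * phat a b (Q j) x)" for i
    show "ECT_restr a b N {(\<lambda>x. \<Sum>j<N. c j * phat a b (Q j) x) | c. True} {t jj<..<t (Suc jj)}"
      unfolding ECT_restr_def u_def[symmetric] v_def[symmetric]
    proof (intro exI[of _ V] conjI ballI allI impI)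
      fix i assume "i < N"
      show "V i \<in> {(\<lambda>x. \<Sum>j<N. c j * phat a b (Q j) x) | c. True}"
        unfolding V_def by (rule CollectI, rule exI[of _ "\<lambda>j. \<sigma> i * Cf i j"]) simp
    next
      fix f assume "f \<in> {(\<lambda>x. \<Sum>j<N. c j * phat a b (Q j) x) | c. True}"
      then obtain d where f: "f = (\<lambda>x. \<Sum>j<N. d j * phat a b (Q j) x)" by blast
      define c where "c i = \<sigma> i * (\<Sum>l<N. d l * M $$ (l, i))" for i
      have key: "(\<Sum>i<N. c i * (\<sigma> i * Cf i j)) = d j" if j: "j < N" for j
      proof -
        have "(\<Sum>i<N. c i * (\<sigma> i * Cf i j)) = (\<Sum>i<N. (\<Sum>l<N. d l * M $$ (l, i)) * Cf i j)"
          unfolding c_def using \<sigma>sq by (intro sum.cong refl) (simp add: mult_ac)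
        also have "\<dots> = (\<Sum>l<N. d l * (\<Sum>i<N. M $$ (l, i) * Cf i j))"
          by (simp only: sum_distrib_left sum_distrib_right mult.assoc) (rule sum.swap)
        also have "\<dots> = (\<Sum>l<N. d l * (if l = j then 1 else 0))"
          using MC j by (intro sum.cong refl) simp
        also have "\<dots> = d j" using j by (simp add: if_distrib cong: if_cong)
        finally show ?thesis .
      qed
      show "\<exists>c. \<forall>t\<in>{u<..<v}. f t = (\<Sum>i<N. c i * V i t)"
      proof (intro exI[of _ c] ballI)
        fix x
        have "(\<Sum>i<N. c i * V i x) = (\<Sum>i<N. \<Sum>j<N. c i * (\<sigma> i * Cf i j) * phat a b (Q j) x)"
          unfolding V_def by (simp add: sum_distrib_left mult_ac)
        also have "\<dots> = (\<Sum>j<N. (\<Sum>i<N. c i * (\<sigma> i * Cf i j)) * phat a b (Q j) x)"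
          by (simp only: sum_distrib_right) (rule sum.swap)
        also have "\<dots> = f x" unfolding f using key by (intro sum.cong refl) simp
        finally show "f x = (\<Sum>i<N. c i * V i x)" by simp
      qed
    next
      fix k x assume k: "k \<in> {1..N}" and x: "x \<in> {u<..<v}"
      have xI: "x \<in> {a..b}" using JI[OF x] .
      have hdV: "has_derivs_on {a..b} (N - 1) (V i)
                  (\<lambda>l x. \<Sum>j<N. (\<sigma> i * Cf i j) * poly ((pderiv ^^ l) (Q j)) (x - a))" for i
        unfolding V_def by (rule hd_sum) (rule hd_phat)
      have dV: "dth a b l (V i) x = \<sigma> i * poly (PE i l) (x - a)" if "l < k" for i l
      proof -
        have "l \<le> N - 1" using that k by auto
        from dth_eq[OF ab hdV this xI]
        show ?thesis unfolding pPE by (simp add: sum_distrib_left mult_ac)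
      qed
      have "wronskian a b k V x = Determinant.det (Matrix.mat k k (\<lambda>(i, l). \<sigma> i * poly (PE i l) (x - a)))"
        unfolding wronskian_def by (rule arg_cong[where f=Determinant.det], rule eq_matI) (auto simp: dV)
      also have "\<dots> = (\<Prod>i<k. \<sigma> i) * poly (WP k) (x - a)"
        unfolding det_rowscale pWP by simp
      also have "(\<Prod>i<k. \<sigma> i) = s k"
        unfolding \<sigma>_def by (rule telescope[of s N]) (use sq k in \<open>auto simp: s_def\<close>)
      finally have W: "wronskian a b k V x = s k * poly (WP k) (x - a)" .
      have pos: "0 < poly (WP k) (x - a) * poly (WP k) (mid - a)"
        by (rule sign_const[OF _ x mid]) (use noroot k in auto)
      have "0 < s k * poly (WP k) (x - a)"
        using pos k unfolding s_def by (auto simp: sgn_if zero_less_mult_iff)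
      then show "0 < wronskian a b k V x" using W by simp
    qed
  qed
qed




definition injpts :: "(nat \<Rightarrow> real \<Rightarrow> real) \<Rightarrow> nat \<Rightarrow> (nat \<Rightarrow> real) \<Rightarrow> bool" where
  "injpts v k x \<longleftrightarrow> (\<forall>c. (\<forall>j<k. (\<Sum>i<k. c i * v i (x j)) = 0) \<longrightarrow> (\<forall>i<k. c i = 0))"

lemma not_injpts_Suc:
  assumes IH: "injpts v k x" and nI: "\<not> injpts v (Suc k) (x(k := y))"
  shows "\<exists>e. e k = 1 \<and> (\<forall>j<Suc k. (\<Sum>i<Suc k. e i * v i ((x(k := y)) j)) = 0)"
proof -
  from nI obtain c where c: "\<forall>j<Suc k. (\<Sum>i<Suc k. c i * v i ((x(k := y)) j)) = 0"
    and nz: "\<exists>i<Suc k. c i \<noteq> 0" unfolding injpts_def by blast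
  have ck: "c k \<noteq> 0"
  proof
    assume ck: "c k = 0"
    have "\<forall>j<k. (\<Sum>i<k. c i * v i (x j)) = 0"
    proof (intro allI impI)
      fix j assume j: "j < k"
      have jj: "j < Suc k" "j \<noteq> k" using j by auto
      have "(\<Sum>i<Suc k. c i * v i ((x(k := y)) j)) = 0" using c jj(1) by blast
      then have "(\<Sum>i<Suc k. c i * v i (x j)) = 0" using jj(2) by simp
      then show "(\<Sum>i<k. c i * v i (x j)) = 0" using ck j by simp
    qed
    then have "\<forall>i<k. c i = 0" using IH unfolding injpts_def by blast
    then show False using nz ck less_Suc_eq by auto
  qed
  define e where "e i = c i / c k" for i
  show ?thesis
  proof (intro exI[of _ e] conjI allI impI)
    show "e k = 1" unfolding e_def using ck by simp
  next
    fix j assume j: "j < Suc k"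
    have "(\<Sum>i<Suc k. e i * v i ((x(k := y)) j)) = (\<Sum>i<Suc k. c i * v i ((x(k := y)) j)) / c k"
      unfolding e_def sum_divide_distrib by (rule sum.cong) simp_all
    then show "(\<Sum>i<Suc k. e i * v i ((x(k := y)) j)) = 0" using c j by simp
  qed
qed

lemma points_exist:
  assumes ab: "a \<le> b"
    and indep: "\<forall>c. (\<forall>x\<in>{a..b}. (\<Sum>i<N. c i * v i x) = 0) \<longrightarrow> (\<forall>i<N. c i = 0)"
  shows "k \<le> N \<Longrightarrow> \<exists>x. (\<forall>j<k. x j \<in> {a..b}) \<and> injpts v k x"
proof (induction k)
  case 0 then show ?case by (auto simp: injpts_def)
next
  case (Suc k)
  then obtain x where xI: "\<forall>j<k. x j \<in> {a..b}" and inj: "injpts v k x" by auto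
  have "\<exists>y\<in>{a..b}. injpts v (Suc k) (x(k := y))"
  proof (rule ccontr)
    assume "\<not> (\<exists>y\<in>{a..b}. injpts v (Suc k) (x(k := y)))"
    then have nI: "\<And>y. y \<in> {a..b} \<Longrightarrow> \<not> injpts v (Suc k) (x(k := y))" by blast
    obtain e0 where e0: "e0 k = 1" "\<forall>j<Suc k. (\<Sum>i<Suc k. e0 i * v i ((x(k := a)) j)) = 0"
      using not_injpts_Suc[OF inj nI[of a]] ab by auto
    define \<gamma> where "\<gamma> i = (if i \<le> k then e0 i else 0)" for i
    have "(\<Sum>i<N. \<gamma> i * v i y) = 0" if y: "y \<in> {a..b}" for y
    proof -
      obtain e where e: "e k = 1" "\<forall>j<Suc k. (\<Sum>i<Suc k. e i * v i ((x(k := y)) j)) = 0"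
        using not_injpts_Suc[OF inj nI[OF y]] by auto
      define g where "g i = e i - e0 i" for i
      have "\<forall>j<k. (\<Sum>i<k. g i * v i (x j)) = 0"
      proof (intro allI impI)
        fix j assume j: "j < k"
        have jj: "j < Suc k" "j \<noteq> k" using j by auto
        have "(\<Sum>i<Suc k. e i * v i ((x(k := y)) j)) = 0" using e(2) jj(1) by blast
        then have 1: "(\<Sum>i<Suc k. e i * v i (x j)) = 0" using jj(2) by simp
        have "(\<Sum>i<Suc k. e0 i * v i ((x(k := a)) j)) = 0" using e0(2) jj(1) by blast
        then have 2: "(\<Sum>i<Suc k. e0 i * v i (x j)) = 0" using jj(2) by simp
        have "(\<Sum>i<k. g i * v i (x j)) = (\<Sum>i<Suc k. e i * v i (x j)) - (\<Sum>i<Suc k. e0 i * v i (x j))"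
          unfolding g_def using e(1) e0(1) by (simp add: sum_subtractf left_diff_distrib)
        then show "(\<Sum>i<k. g i * v i (x j)) = 0" using 1 2 by simp
      qed
      then have g0: "\<forall>i<k. g i = 0" using inj unfolding injpts_def by blast
      have "(\<Sum>i<N. \<gamma> i * v i y) = (\<Sum>i<Suc k. \<gamma> i * v i y)"
        by (rule sum.mono_neutral_right) (use Suc.prems in \<open>auto simp: \<gamma>_def\<close>)
      also have "\<dots> = (\<Sum>i<Suc k. e i * v i y)"
      proof (rule sum.cong[OF refl])
        fix i assume "i \<in> {..<Suc k}"
        then have "i < k \<or> i = k" by auto
        then show "\<gamma> i * v i y = e i * v i y" using g0 e(1) e0(1) unfolding \<gamma>_def g_def by auto
      qed
      also have "\<dots> = 0" using e(2)[rule_format, of k] by simp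
      finally show ?thesis .
    qed
    then have "\<forall>i<N. \<gamma> i = 0" using indep by blast
    then have "\<gamma> k = 0" using Suc.prems by auto
    then show False using e0(1) by (simp add: \<gamma>_def)
  qed
  then obtain y where y: "y \<in> {a..b}" "injpts v (Suc k) (x(k := y))" by blast
  show ?case
  proof (intro exI[of _ "x(k := y)"] conjI)
    show "\<forall>j<Suc k. (x(k := y)) j \<in> {a..b}" using xI y by (auto simp: less_Suc_eq)
    show "injpts v (Suc k) (x(k := y))" by (rule y(2))
  qed
qed

lemma coeff_bound:
  fixes v :: "nat \<Rightarrow> real \<Rightarrow> real" and N :: nat
  assumes ab: "a < b" and Dv: "\<And>j. j < N \<Longrightarrow> has_derivs_on {a..b} n (v j) (Dv j)"
    and indep: "\<forall>c. (\<forall>x\<in>{a..b}. (\<Sum>i<N. c i * v i x) = 0) \<longrightarrow> (\<forall>i<N. c i = 0)"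
  shows "\<exists>K>0. \<forall>c. (\<Sum>i<N. \<bar>c i\<bar>) \<le> K * Cnorm a b n (\<lambda>x. \<Sum>i<N. c i * v i x)"
proof -
  obtain x where xI: "\<forall>j<N. x j \<in> {a..b}" and inj: "injpts v N x"
    using points_exist[OF less_imp_le[OF ab] indep, of N] by auto
  define V where "V = Matrix.mat N N (\<lambda>(j, i). v i (x j))"
  have Vc: "V \<in> carrier_mat N N" unfolding V_def by simp
  have Vmv: "(V *\<^sub>v w) $ j = (\<Sum>i<N. w $ i * v i (x j))" if "j < N" "w \<in> carrier_vec N" for w j
    using that unfolding V_def by (simp add: scalar_prod_def atLeast0LessThan mult.commute)
  define dV where "dV = Determinant.det V"
  have dV: "dV \<noteq> 0"
  proof
    assume "dV = 0"
    then obtain w where w: "w \<in> carrier_vec N" "w \<noteq> 0\<^sub>v N" "V *\<^sub>v w = 0\<^sub>v N"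
      using det_0_iff_vec_prod_zero_field[OF Vc] unfolding dV_def by blast
    have "\<forall>j<N. (\<Sum>i<N. w $ i * v i (x j)) = 0"
    proof (intro allI impI)
      fix j assume j: "j < N"
      have "(V *\<^sub>v w) $ j = 0" using w(3) j by simp
      then show "(\<Sum>i<N. w $ i * v i (x j)) = 0" using Vmv[OF j w(1)] by simp
    qed
    then have "\<forall>i<N. w $ i = 0" using inj unfolding injpts_def by blast
    then have "w = 0\<^sub>v N" using w(1) by (intro eq_vecI) auto
    then show False using w(2) by simp
  qed
  define A where "A = adj_mat V"
  have Ac: "A \<in> carrier_mat N N" unfolding A_def using adj_mat(1)[OF Vc] .
  have AV: "(\<Sum>j<N. A $$ (i, j) * V $$ (j, l)) = (if i = l then dV else 0)" if "i < N" "l < N" for i l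
  proof -
    have "(A * V) $$ (i, l) = (\<Sum>j<N. A $$ (i, j) * V $$ (j, l))"
      by (rule mat_entry_sum[OF Ac Vc that])
    also have "A * V = dV \<cdot>\<^sub>m 1\<^sub>m N" unfolding A_def dV_def by (rule adj_mat(3)[OF Vc])
    finally have "(\<Sum>j<N. A $$ (i, j) * V $$ (j, l)) = dV * (if i = l then 1 else 0)"
      using that by simp
    then show ?thesis by simp
  qed
  define K where "K = (\<Sum>i<N. \<Sum>j<N. \<bar>A $$ (i, j)\<bar>) / \<bar>dV\<bar> + 1"
  have "0 \<le> (\<Sum>i<N. \<Sum>j<N. \<bar>A $$ (i, j)\<bar>) / \<bar>dV\<bar>"
    by (intro divide_nonneg_nonneg sum_nonneg) auto
  then have K0: "0 < K" unfolding K_def by linarith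
  show ?thesis
  proof (intro exI[of _ K] conjI allI K0)
    fix c
    let ?f = "\<lambda>x. \<Sum>i<N. c i * v i x"
    have hf: "has_derivs_on {a..b} n ?f (\<lambda>l y. \<Sum>i<N. c i * Dv i l y)" by (rule hd_sum[OF Dv])
    have fx: "\<bar>?f (x j)\<bar> \<le> Cnorm a b n ?f" if "j < N" for j
    proof -
      have "(\<Sum>i<N. c i * Dv i 0 (x j)) = ?f (x j)"
        using hf xI that unfolding has_derivs_on_def by blast
      then show ?thesis using cnorm_ge[OF ab hf, of 0 "x j"] xI that by simp
    qed
    have cn0: "0 \<le> Cnorm a b n ?f" by (rule cnorm_nonneg[OF ab hf])
    have ci: "dV * c i = (\<Sum>j<N. A $$ (i, j) * ?f (x j))" if i: "i < N" for i
    proof -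
      have "(\<Sum>j<N. A $$ (i, j) * ?f (x j)) = (\<Sum>j<N. \<Sum>l<N. A $$ (i, j) * V $$ (j, l) * c l)"
        unfolding V_def by (intro sum.cong refl) (auto simp: sum_distrib_left mult_ac intro!: sum.cong)
      also have "\<dots> = (\<Sum>l<N. \<Sum>j<N. A $$ (i, j) * V $$ (j, l) * c l)" by (rule sum.swap)
      also have "\<dots> = (\<Sum>l<N. (if i = l then dV else 0) * c l)"
        by (intro sum.cong refl) (simp add: AV[OF i, symmetric] sum_distrib_right)
      also have "\<dots> = (\<Sum>l<N. (if i = l then dV * c l else 0))" by (intro sum.cong refl) simp
      also have "\<dots> = dV * c i" using i by (simp add: sum.delta)
      finally show ?thesis by simp
    qed
    have cb: "\<bar>c i\<bar> \<le> (\<Sum>j<N. \<bar>A $$ (i, j)\<bar>) / \<bar>dV\<bar> * Cnorm a b n ?f" if i: "i < N" for i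
    proof -
      have "\<bar>dV\<bar> * \<bar>c i\<bar> = \<bar>\<Sum>j<N. A $$ (i, j) * ?f (x j)\<bar>" using ci[OF i] by (simp add: abs_mult[symmetric])
      also have "\<dots> \<le> (\<Sum>j<N. \<bar>A $$ (i, j)\<bar> * \<bar>?f (x j)\<bar>)" by (rule order_trans[OF sum_abs]) (simp add: abs_mult)
      also have "\<dots> \<le> (\<Sum>j<N. \<bar>A $$ (i, j)\<bar> * Cnorm a b n ?f)"
        by (intro sum_mono mult_left_mono fx) auto
      finally have "\<bar>dV\<bar> * \<bar>c i\<bar> \<le> (\<Sum>j<N. \<bar>A $$ (i, j)\<bar>) * Cnorm a b n ?f" by (simp add: sum_distrib_right)
      then show ?thesis using dV by (simp add: field_simps)
    qed
    have "(\<Sum>i<N. \<bar>c i\<bar>) \<le> (\<Sum>i<N. (\<Sum>j<N. \<bar>A $$ (i, j)\<bar>) / \<bar>dV\<bar> * Cnorm a b n ?f)"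
      by (intro sum_mono cb) auto
    also have "\<dots> = ((\<Sum>i<N. \<Sum>j<N. \<bar>A $$ (i, j)\<bar>) / \<bar>dV\<bar>) * Cnorm a b n ?f"
      by (simp add: sum_distrib_right sum_divide_distrib)
    also have "\<dots> \<le> K * Cnorm a b n ?f" unfolding K_def using cn0 by (intro mult_right_mono) auto
    finally show "(\<Sum>i<N. \<bar>c i\<bar>) \<le> K * Cnorm a b n ?f" .
  qed
qed




lemma hd_diff:
  assumes "has_derivs_on S k f D" "has_derivs_on S k g E"
  shows "has_derivs_on S k (\<lambda>x. f x - g x) (\<lambda>i x. D i x - E i x)"
  using assms unfolding has_derivs_on_def
  by (auto intro!: DERIV_diff continuous_intros)

lemma sup_inf_bound:
  fixes \<phi> :: "'a \<Rightarrow> 'b \<Rightarrow> real"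
  assumes A: "A \<noteq> {}" and B: "B \<noteq> {}" and nn: "\<And>f g. f \<in> A \<Longrightarrow> g \<in> B \<Longrightarrow> 0 \<le> \<phi> f g"
    and ex: "\<And>f. f \<in> A \<Longrightarrow> \<exists>g\<in>B. \<phi> f g \<le> r"
  shows "0 \<le> (SUP f\<in>A. INF g\<in>B. \<phi> f g) \<and> (SUP f\<in>A. INF g\<in>B. \<phi> f g) \<le> r"
proof -
  have bb: "bdd_below ((\<phi> f) ` B)" if "f \<in> A" for f
    using nn[OF that] by (auto simp: bdd_below_def)
  have le: "(INF g\<in>B. \<phi> f g) \<le> r" if f: "f \<in> A" for f
  proof -
    obtain g where g: "g \<in> B" "\<phi> f g \<le> r" using ex[OF f] by blast
    show ?thesis by (rule cINF_lower2[OF bb[OF f] g])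
  qed
  have ge: "0 \<le> (INF g\<in>B. \<phi> f g)" if f: "f \<in> A" for f
    by (rule cINF_greatest[OF B]) (use nn f in auto)
  have ba: "bdd_above ((\<lambda>f. INF g\<in>B. \<phi> f g) ` A)" using le by (auto simp: bdd_above_def)
  obtain f0 where f0: "f0 \<in> A" using A by blast
  have "0 \<le> (SUP f\<in>A. INF g\<in>B. \<phi> f g)"
    using cSUP_upper2[OF ba f0 ge[OF f0]] .
  moreover have "(SUP f\<in>A. INF g\<in>B. \<phi> f g) \<le> r" by (rule cSUP_least[OF A le])
  ultimately show ?thesis by blast
qed

lemma sum_bound_diff:
  fixes c :: "nat \<Rightarrow> real"
  assumes "\<And>j. j < N \<Longrightarrow> \<bar>p j - q j\<bar> \<le> e"
  shows "\<bar>(\<Sum>j<N. c j * p j) - (\<Sum>j<N. c j * q j)\<bar> \<le> e * (\<Sum>j<N. \<bar>c j\<bar>)"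
proof -
  have "\<bar>(\<Sum>j<N. c j * p j) - (\<Sum>j<N. c j * q j)\<bar> = \<bar>\<Sum>j<N. c j * (p j - q j)\<bar>"
    by (simp add: sum_subtractf right_diff_distrib)
  also have "\<dots> \<le> (\<Sum>j<N. \<bar>c j * (p j - q j)\<bar>)" by (rule sum_abs)
  also have "\<dots> \<le> (\<Sum>j<N. \<bar>c j\<bar> * e)"
    by (intro sum_mono) (use assms in \<open>auto simp: abs_mult intro!: mult_left_mono\<close>)
  also have "\<dots> = e * (\<Sum>j<N. \<bar>c j\<bar>)" by (simp add: sum_distrib_left mult.commute)
  finally show ?thesis .
qed

lemma haus_bound:
  fixes v :: "nat \<Rightarrow> real \<Rightarrow> real" and N :: nat and Q :: "nat \<Rightarrow> real poly"
  assumes ab: "a < b" and Dv: "\<And>j. j < N \<Longrightarrow> has_derivs_on {a..b} n (v j) (Dv j)"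
    and K: "0 < K" and Kb: "\<And>c. (\<Sum>i<N. \<bar>c i\<bar>) \<le> K * Cnorm a b n (\<lambda>x. \<Sum>i<N. c i * v i x)"
    and apx: "\<And>j i x. j < N \<Longrightarrow> i \<le> n \<Longrightarrow> x \<in> {a..b} \<Longrightarrow>
                 \<bar>Dv j i x - poly ((pderiv ^^ i) (Q j)) (x - a)\<bar> \<le> e"
    and e0: "0 \<le> e" and Ke: "2 * K * e \<le> 1"
  shows "0 \<le> hausdorff_C a b n (unit_ball_C a b n {(\<lambda>x. \<Sum>j<N. c j * phat a b (Q j) x) | c. True})
                                 (unit_ball_C a b n {(\<lambda>x. \<Sum>i<N. c i * v i x) | c. True}) \<and>
         hausdorff_C a b n (unit_ball_C a b n {(\<lambda>x. \<Sum>j<N. c j * phat a b (Q j) x) | c. True})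
                                 (unit_ball_C a b n {(\<lambda>x. \<Sum>i<N. c i * v i x) | c. True}) \<le> 4 * K * e"
proof -
  define Fq where "Fq c = (\<lambda>x. \<Sum>j<N. c j * phat a b (Q j) x)" for c
  define Fv where "Fv c = (\<lambda>x. \<Sum>i<N. c i * v i x)" for c
  define DFq where "DFq c l x = (\<Sum>j<N. c j * poly ((pderiv ^^ l) (Q j)) (x - a))" for c l x
  define DFv where "DFv c l x = (\<Sum>j<N. c j * Dv j l x)" for c l x
  define A where "A = unit_ball_C a b n {Fq c | c. True}"
  define B where "B = unit_ball_C a b n {Fv c | c. True}"
  define \<nu> where "\<nu> f = Cnorm a b n f" for f
  have hq: "has_derivs_on {a..b} n (Fq c) (DFq c)" for c
    unfolding Fq_def DFq_def by (rule hd_sum) (rule hd_phat)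
  have hv: "has_derivs_on {a..b} n (Fv c) (DFv c)" for c
    unfolding Fv_def DFv_def by (rule hd_sum[OF Dv])
  have ge: "\<bar>D l x\<bar> \<le> \<nu> f" if "has_derivs_on {a..b} n f D" "l \<le> n" "x \<in> {a..b}" for f D l x
    unfolding \<nu>_def by (rule cnorm_ge[OF ab that])
  have le: "\<nu> f \<le> r" if "has_derivs_on {a..b} n f D" "\<And>l x. l \<le> n \<Longrightarrow> x \<in> {a..b} \<Longrightarrow> \<bar>D l x\<bar> \<le> r"
    for f D r unfolding \<nu>_def by (rule cnorm_le[OF ab that])
  have qv: "\<bar>DFq c l x - DFv c l x\<bar> \<le> e * (\<Sum>j<N. \<bar>c j\<bar>)" if "l \<le> n" "x \<in> {a..b}" for c l x
  proof -
    have "\<bar>DFv c l x - DFq c l x\<bar> \<le> e * (\<Sum>j<N. \<bar>c j\<bar>)"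
      unfolding DFq_def DFv_def by (rule sum_bound_diff) (use apx that in auto)
    then show ?thesis by (simp add: abs_minus_commute)
  qed
  have DFq_scale: "DFq (\<lambda>j. c j / r) l x = DFq c l x / r" for c r l x
    unfolding DFq_def by (simp add: sum_divide_distrib)
  have DFv_scale: "DFv (\<lambda>j. c j / r) l x = DFv c l x / r" for c r l x
    unfolding DFv_def by (simp add: sum_divide_distrib)
  have Fq_A: "Fq c \<in> A \<longleftrightarrow> \<nu> (Fq c) \<le> 1" for c unfolding A_def unit_ball_C_def \<nu>_def by blast
  have Fv_B: "Fv c \<in> B \<longleftrightarrow> \<nu> (Fv c) \<le> 1" for c unfolding B_def unit_ball_C_def \<nu>_def by blast
  have A_form: "\<exists>c. f = Fq c \<and> \<nu> (Fq c) \<le> 1" if "f \<in> A" for f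
    using that unfolding A_def unit_ball_C_def \<nu>_def by blast
  have B_form: "\<exists>c. g = Fv c \<and> \<nu> (Fv c) \<le> 1" if "g \<in> B" for g
    using that unfolding B_def unit_ball_C_def \<nu>_def by blast
  have nn: "0 \<le> \<nu> (\<lambda>x. Fq c x - Fv d x)" for c d
    unfolding \<nu>_def by (rule cnorm_nonneg[OF ab hd_diff[OF hq hv]])
  have A0: "Fq (\<lambda>_. 0) \<in> A" unfolding Fq_A by (rule le[OF hq]) (simp add: DFq_def)
  have B0: "Fv (\<lambda>_. 0) \<in> B" unfolding Fv_B by (rule le[OF hv]) (simp add: DFv_def)
  have p1: "\<exists>g\<in>B. \<nu> (\<lambda>x. f x - g x) \<le> 4 * K * e" if f: "f \<in> A" for f
  proof -
    obtain c where fc: "f = Fq c" and c1: "\<nu> (Fq c) \<le> 1" using A_form[OF f] by blast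
    define S where "S = (\<Sum>j<N. \<bar>c j\<bar>)"
    have S0: "0 \<le> S" unfolding S_def by (simp add: sum_nonneg)
    have q1: "\<bar>DFq c l x\<bar> \<le> 1" if "l \<le> n" "x \<in> {a..b}" for l x
      using ge[OF hq[of c] that] c1 by linarith
    have v1: "\<bar>DFv c l x\<bar> \<le> 1 + e * S" if "l \<le> n" "x \<in> {a..b}" for l x
      using q1[OF that] qv[OF that, of c] unfolding S_def by linarith
    have "\<nu> (Fv c) \<le> 1 + e * S" by (rule le[OF hv v1])
    moreover have "S \<le> K * \<nu> (Fv c)" using Kb[of c] unfolding S_def Fv_def \<nu>_def .
    ultimately have "S \<le> K * (1 + e * S)" using mult_left_mono[of "\<nu> (Fv c)" "1 + e * S" K] K by linarith
    then have "S \<le> K + (K * e) * S" by (simp add: algebra_simps)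
    moreover have "(K * e) * S \<le> (1 / 2) * S" by (rule mult_right_mono) (use Ke S0 in auto)
    ultimately have S2: "S \<le> 2 * K" by linarith
    define lm where "lm = 1 + 2 * K * e"
    have lam: "1 \<le> lm" unfolding lm_def using K e0 by simp
    define d where "d j = c j / lm" for j
    have eS: "e * S \<le> 2 * K * e" using mult_left_mono[OF S2 e0] by (simp add: mult_ac)
    have vb: "\<bar>DFv c l x\<bar> \<le> lm" if "l \<le> n" "x \<in> {a..b}" for l x
      using v1[OF that] eS unfolding lm_def by linarith
    have gB: "Fv d \<in> B" unfolding Fv_B
    proof (rule le[OF hv])
      fix l x assume lx: "l \<le> n" "x \<in> {a..b}"
      have "\<bar>DFv d l x\<bar> = \<bar>DFv c l x\<bar> / lm" unfolding d_def DFv_scale using lam by simp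
      also have "\<dots> \<le> 1" using vb[OF lx] lam by simp
      finally show "\<bar>DFv d l x\<bar> \<le> 1" .
    qed
    have "\<nu> (\<lambda>x. f x - Fv d x) \<le> 4 * K * e"
      unfolding fc
    proof (rule le[OF hd_diff[OF hq hv]])
      fix l x assume lx: "l \<le> n" "x \<in> {a..b}"
      have t1: "\<bar>DFq c l x - DFv d l x\<bar> \<le> \<bar>DFq c l x - DFv c l x\<bar> + \<bar>DFv c l x - DFv d l x\<bar>" by linarith
      have t2: "\<bar>DFv c l x - DFv d l x\<bar> = \<bar>DFv c l x\<bar> * (1 - 1 / lm)"
      proof -
        have eq: "DFv c l x - DFv d l x = DFv c l x * (1 - 1 / lm)"
          unfolding d_def DFv_scale by (simp add: algebra_simps)
        have nn1: "0 \<le> 1 - 1 / lm" using lam by simp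
        show ?thesis unfolding eq using nn1 by (simp add: abs_mult)
      qed
      have t3: "\<bar>DFv c l x\<bar> * (1 - 1 / lm) \<le> lm * (1 - 1 / lm)" using vb[OF lx] lam by (intro mult_right_mono) auto
      have t4: "lm * (1 - 1 / lm) = 2 * K * e" unfolding lm_def using lam unfolding lm_def
        by (simp add: field_simps)
      show "\<bar>DFq c l x - DFv d l x\<bar> \<le> 4 * K * e" using t1 t2 t3 t4 qv[OF lx, of c] eS unfolding S_def
        by linarith
    qed
    then show ?thesis using gB by (intro bexI[of _ "Fv d"])
  qed
  have p2: "\<exists>f\<in>A. \<nu> (\<lambda>x. f x - g x) \<le> 4 * K * e" if g: "g \<in> B" for g
  proof -
    obtain d where gd: "g = Fv d" and d1: "\<nu> (Fv d) \<le> 1" using B_form[OF g] by blast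
    define S where "S = (\<Sum>j<N. \<bar>d j\<bar>)"
    have S0: "0 \<le> S" unfolding S_def by (simp add: sum_nonneg)
    have "S \<le> K * \<nu> (Fv d)" using Kb[of d] unfolding S_def Fv_def \<nu>_def .
    then have SK: "S \<le> K" using mult_left_mono[OF d1, of K] K by linarith
    have eS: "e * S \<le> K * e" using mult_left_mono[OF SK e0] by (simp add: mult_ac)
    define \<mu> where "\<mu> = 1 + K * e"
    have mu: "1 \<le> \<mu>" unfolding \<mu>_def using K e0 by simp
    have v1: "\<bar>DFv d l x\<bar> \<le> 1" if "l \<le> n" "x \<in> {a..b}" for l x
      using ge[OF hv[of d] that] d1 by linarith
    have qb: "\<bar>DFq d l x\<bar> \<le> \<mu>" if "l \<le> n" "x \<in> {a..b}" for l x
      using v1[OF that] qv[OF that, of d] eS unfolding S_def \<mu>_def by linarith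
    define c where "c j = d j / \<mu>" for j
    have fA: "Fq c \<in> A" unfolding Fq_A
    proof (rule le[OF hq])
      fix l x assume lx: "l \<le> n" "x \<in> {a..b}"
      have "\<bar>DFq c l x\<bar> = \<bar>DFq d l x\<bar> / \<mu>" unfolding c_def DFq_scale using mu by simp
      also have "\<dots> \<le> 1" using qb[OF lx] mu by simp
      finally show "\<bar>DFq c l x\<bar> \<le> 1" .
    qed
    have "\<nu> (\<lambda>x. Fq c x - g x) \<le> 4 * K * e"
      unfolding gd
    proof (rule le[OF hd_diff[OF hq hv]])
      fix l x assume lx: "l \<le> n" "x \<in> {a..b}"
      have t1: "\<bar>DFq c l x - DFv d l x\<bar> \<le> \<bar>DFq c l x - DFq d l x\<bar> + \<bar>DFq d l x - DFv d l x\<bar>" by linarith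
      have t2: "\<bar>DFq c l x - DFq d l x\<bar> = \<bar>DFq d l x\<bar> * (1 - 1 / \<mu>)"
      proof -
        have eq: "DFq d l x - DFq c l x = DFq d l x * (1 - 1 / \<mu>)"
          unfolding c_def DFq_scale by (simp add: algebra_simps)
        have nn1: "0 \<le> 1 - 1 / \<mu>" using mu by simp
        have "\<bar>DFq c l x - DFq d l x\<bar> = \<bar>DFq d l x - DFq c l x\<bar>" by (rule abs_minus_commute)
        also have "\<dots> = \<bar>DFq d l x * (1 - 1 / \<mu>)\<bar>" unfolding eq ..
        also have "\<dots> = \<bar>DFq d l x\<bar> * (1 - 1 / \<mu>)" using nn1 by (simp add: abs_mult)
        finally show ?thesis .
      qed
      have t3: "\<bar>DFq d l x\<bar> * (1 - 1 / \<mu>) \<le> \<mu> * (1 - 1 / \<mu>)" using qb[OF lx] mu by (intro mult_right_mono) auto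
      have t4: "\<mu> * (1 - 1 / \<mu>) = K * e" unfolding \<mu>_def using mu unfolding \<mu>_def
        by (simp add: field_simps)
      have t5: "0 \<le> K * e" using K e0 by simp
      show "\<bar>DFq c l x - DFv d l x\<bar> \<le> 4 * K * e" using t1 t2 t3 t4 t5 qv[OF lx, of d] eS unfolding S_def
        by linarith
    qed
    then show ?thesis using fA by (intro bexI[of _ "Fq c"])
  qed
  have nnA: "0 \<le> \<nu> (\<lambda>x. f x - g x)" if fA': "f \<in> A" and gB': "g \<in> B" for f g
  proof -
    obtain c where "f = Fq c" using A_form[OF fA'] by blast
    moreover obtain d where "g = Fv d" using B_form[OF gB'] by blast
    ultimately show ?thesis using nn[of c d] by simp
  qed
  have Ane: "A \<noteq> {}" using A0 by auto
  have Bne: "B \<noteq> {}" using B0 by auto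
  have h1: "0 \<le> (SUP f\<in>A. INF g\<in>B. \<nu> (\<lambda>x. f x - g x)) \<and> (SUP f\<in>A. INF g\<in>B. \<nu> (\<lambda>x. f x - g x)) \<le> 4 * K * e"
    by (rule sup_inf_bound[OF Ane Bne nnA p1])
  have h2: "0 \<le> (SUP g\<in>B. INF f\<in>A. \<nu> (\<lambda>x. f x - g x)) \<and> (SUP g\<in>B. INF f\<in>A. \<nu> (\<lambda>x. f x - g x)) \<le> 4 * K * e"
    by (rule sup_inf_bound[OF Bne Ane _ p2]) (rule nnA)
  have "hausdorff_C a b n A B = max (SUP f\<in>A. INF g\<in>B. \<nu> (\<lambda>x. f x - g x)) (SUP g\<in>B. INF f\<in>A. \<nu> (\<lambda>x. f x - g x))"
    unfolding hausdorff_C_def \<nu>_def ..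
  then have "0 \<le> hausdorff_C a b n A B \<and> hausdorff_C a b n A B \<le> 4 * K * e" using h1 h2 by linarith
  then show ?thesis unfolding A_def B_def Fq_def Fv_def .
qed




theorem mainTheorem1:
  fixes a b :: real and N :: nat and X :: "(real \<Rightarrow> real) set"
  assumes "a < b" and "N \<ge> 1" and "dim_subspace a b N X"
  shows "\<exists>Xs :: nat \<Rightarrow> (real \<Rightarrow> real) set.
           (\<forall>m. dim_subspace a b N (Xs m)) \<and>
           (\<forall>m. \<exists>(p::nat) (t::nat \<Rightarrow> real).
                  t 0 = a \<and> t p = b \<and> (\<forall>j<p. t j < t (Suc j)) \<and>
                  (\<forall>j<p. ECT_restr a b N (Xs m) {t j<..<t (Suc j)})) \<and>
           (\<lambda>m. hausdorff_C a b (N - 1) (unit_ball_C a b (N - 1) (Xs m))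
                                        (unit_ball_C a b (N - 1) X)) \<longlonglongrightarrow> 0"
proof -
  note ab = assms(1) and N1 = assms(2)
  obtain v where vC: "\<forall>i<N. v i \<in> Cspace a b (N - 1)"
    and indep: "\<forall>c. (\<forall>x\<in>{a..b}. (\<Sum>i<N. c i * v i x) = 0) \<longrightarrow> (\<forall>i<N. c i = 0)"
    and X: "X = {(\<lambda>x. \<Sum>i<N. c i * v i x) | c. True}"
    using assms(3) unfolding dim_subspace_def by blast
  have "\<forall>i. \<exists>D. i < N \<longrightarrow> has_derivs_on {a..b} (N - 1) (v i) D"
    using vC unfolding Cspace_def by blast
  from choice[OF this] obtain Dv where Dv: "\<And>i. i < N \<Longrightarrow> has_derivs_on {a..b} (N - 1) (v i) (Dv i)"
    by blast
  obtain K where K: "0 < K" and Kb: "\<And>c. (\<Sum>i<N. \<bar>c i\<bar>) \<le> K * Cnorm a b (N - 1) (\<lambda>x. \<Sum>i<N. c i * v i x)"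
    using coeff_bound[OF ab Dv indep] by blast
  define \<epsilon> where "\<epsilon> m = inverse (real (Suc m))" for m
  have \<epsilon>0: "0 < \<epsilon> m" for m unfolding \<epsilon>_def by simp
  have "\<exists>Q. (\<forall>j<N. \<forall>i\<le>N - 1. \<forall>x\<in>{a..b}. \<bar>Dv j i x - poly ((pderiv ^^ i) (Q j)) (x - a)\<bar> \<le> \<epsilon> m) \<and>
             Determinant.det (Matrix.mat N N (\<lambda>(j, l). poly ((pderiv ^^ l) (Q j)) 0)) \<noteq> 0" for m
    by (rule approx_basis[OF ab Dv \<epsilon>0])
  then have "\<forall>m. \<exists>Q. (\<forall>j<N. \<forall>i\<le>N - 1. \<forall>x\<in>{a..b}. \<bar>Dv j i x - poly ((pderiv ^^ i) (Q j)) (x - a)\<bar> \<le> \<epsilon> m) \<and>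
             Determinant.det (Matrix.mat N N (\<lambda>(j, l). poly ((pderiv ^^ l) (Q j)) 0)) \<noteq> 0" ..
  from choice[OF this] obtain Qs where
    Qa: "\<And>m j i x. j < N \<Longrightarrow> i \<le> N - 1 \<Longrightarrow> x \<in> {a..b} \<Longrightarrow>
           \<bar>Dv j i x - poly ((pderiv ^^ i) (Qs m j)) (x - a)\<bar> \<le> \<epsilon> m"
    and Qd: "\<And>m. Determinant.det (MQ N (Qs m)) \<noteq> 0"
    unfolding MQ_def by blast
  define Xs where "Xs m = {(\<lambda>x. \<Sum>j<N. c j * phat a b (Qs m j) x) | c. True}" for m
  define h where "h m = hausdorff_C a b (N - 1) (unit_ball_C a b (N - 1) (Xs m)) (unit_ball_C a b (N - 1) X)" for m
  have lim\<epsilon>: "\<epsilon> \<longlonglongrightarrow> 0" unfolding \<epsilon>_def by (rule LIMSEQ_inverse_real_of_nat)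
  have "\<forall>\<^sub>F m in sequentially. \<epsilon> m < 1 / (2 * K)"
    using order_tendstoD(2)[OF lim\<epsilon>, of "1 / (2 * K)"] K by simp
  then have ev: "\<forall>\<^sub>F m in sequentially. 2 * K * \<epsilon> m \<le> 1"
    by eventually_elim (use K in \<open>simp add: field_simps\<close>)
  have hb: "0 \<le> h m \<and> h m \<le> 4 * K * \<epsilon> m" if "2 * K * \<epsilon> m \<le> 1" for m
    unfolding h_def Xs_def X
    by (rule haus_bound[OF ab Dv K Kb Qa]) (use \<epsilon>0[of m] that in auto)
  have lim4: "(\<lambda>m. 4 * K * \<epsilon> m) \<longlonglongrightarrow> 0"
    using tendsto_mult_right_zero[OF lim\<epsilon>, of "4 * K"] by simp
  have "h \<longlonglongrightarrow> 0"
  proof (rule tendsto_sandwich[OF _ _ tendsto_const lim4])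
    show "\<forall>\<^sub>F m in sequentially. 0 \<le> h m" using ev by eventually_elim (use hb in blast)
    show "\<forall>\<^sub>F m in sequentially. h m \<le> 4 * K * \<epsilon> m" using ev by eventually_elim (use hb in blast)
  qed
  show ?thesis
  proof (intro exI[of _ Xs] conjI allI)
    fix m show "dim_subspace a b N (Xs m)" unfolding Xs_def by (rule dim_span_Q[OF ab Qd])
  next
    fix m show "\<exists>(p::nat) (t::nat \<Rightarrow> real). t 0 = a \<and> t p = b \<and> (\<forall>j<p. t j < t (Suc j)) \<and>
                  (\<forall>j<p. ECT_restr a b N (Xs m) {t j<..<t (Suc j)})"
      unfolding Xs_def by (rule ect_span_Q[OF ab N1 Qd])
  next
    show "(\<lambda>m. hausdorff_C a b (N - 1) (unit_ball_C a b (N - 1) (Xs m)) (unit_ball_C a b (N - 1) X)) \<longlonglongrightarrow> 0"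
      using \<open>h \<longlonglongrightarrow> 0\<close> unfolding h_def .
  qed
qed


end
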